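(* Let $G$ be a finite group acting on a space $X$ and $n\ge 2$. The evaluation map $\epsilon_n : M^G_n(X) \to X^n$, $(\alpha_1,g_1,\alpha_2,\ldots,g_{n-1},\alpha_n)\mapsto(\alpha_1(1),\ldots,\alpha_n(1))$, is a fibration. Moreover, its sectional category equals the sectional category of the saturated diagonal map $\Delta^n_G : X\times G^{n-1}\to X^n$, $(x,g_1,\ldots,g_{n-1})\mapsto (x, xg_1, xg_1g_2,\ldots, xg_1\cdots g_{n-1})$.
   Context: All spaces are Hausdorff, path-connected and locally path-connected; $G$ acts on the right. $PX$ denotes the space of paths $[0,1]\to X$ with the compact-open topology. $M^G_n(X)$ is the subspace of $PX\times G\times PX\times\cdots\times G\times PX$ (with $n$ path factors and $n-1$ group factors, $G$ discrete) consisting of tuples $(\alpha_1,g_1,\alpha_2,g_2,\ldots,\alpha_{n-1},g_{n-1},\alpha_n)$ with $\alpha_i(0)g_i=\alpha_{i+1}(0)$ for $1\le i\le n-1$. The (non-reduced) sectional category $\mathrm{secat}(p)$ of a map $p:E\to B$ is the least $k$ such that $B$ is covered by $k$ open sets on each of which $p$ admits a continuous section up to homotopy (for a fibration, a genuine continuous section); for a general map it is the sectional category of its fibrational replacement. *)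

theory Defs
  imports "HOL-Analysis.Analysis" "HOL-Algebra.Group"
begin

text \<open>Paths are maps [0,1] -> X, represented as functions real => 'a that are
  continuous on [0,1] and take the value undefined outside [0,1].\<close>

definition paths_of :: "'a topology \<Rightarrow> (real \<Rightarrow> 'a) set" where
  "paths_of X = {g. pathin X g \<and> (\<forall>t. t \<notin> {0..1} \<longrightarrow> g t = undefined)}"

definition path_space :: "'a topology \<Rightarrow> (real \<Rightarrow> 'a) topology" where
  "path_space X = topology_generated_by
     {{g \<in> paths_of X. g ` K \<subseteq> U} | K U.
        compactin (top_of_set {0..1::real}) K \<and> openin X U}"

definition right_action ::
  "('g, 'b) monoid_scheme \<Rightarrow> 'a topology \<Rightarrow> ('a \<Rightarrow> 'g \<Rightarrow> 'a) \<Rightarrow> bool" where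
  "right_action G X act \<longleftrightarrow> group G \<and>
     (\<forall>g \<in> carrier G. continuous_map X X (\<lambda>x. act x g)) \<and>
     (\<forall>x \<in> topspace X. act x \<one>\<^bsub>G\<^esub> = x) \<and>
     (\<forall>x \<in> topspace X. \<forall>g \<in> carrier G. \<forall>h \<in> carrier G.
        act (act x g) h = act x (g \<otimes>\<^bsub>G\<^esub> h))"

primrec gprod :: "('g, 'b) monoid_scheme \<Rightarrow> (nat \<Rightarrow> 'g) \<Rightarrow> nat \<Rightarrow> 'g" where
  "gprod G gs 0 = \<one>\<^bsub>G\<^esub>"
| "gprod G gs (Suc i) = gprod G gs i \<otimes>\<^bsub>G\<^esub> gs i"

definition hlp_wrt :: "'z topology \<Rightarrow> 'e topology \<Rightarrow> 'b topology \<Rightarrow> ('e \<Rightarrow> 'b) \<Rightarrow> bool" where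
  "hlp_wrt Z E B p \<longleftrightarrow>
     (\<forall>f H. continuous_map Z E f \<and>
            continuous_map (prod_topology Z (top_of_set {0..1::real})) B H \<and>
            (\<forall>z \<in> topspace Z. H (z, 0) = p (f z))
        \<longrightarrow> (\<exists>K. continuous_map (prod_topology Z (top_of_set {0..1::real})) E K \<and>
                 (\<forall>z \<in> topspace Z. K (z, 0) = f z) \<and>
                 (\<forall>z \<in> topspace Z. \<forall>t \<in> {0..1}. p (K (z, t)) = H (z, t))))"

text \<open>Hurewicz fibration: continuous, with the HLP for every space Z.  Spaces
  are quantified over the (arbitrary) carrier type 'z.\<close>
definition fibration_wrt :: "'z itself \<Rightarrow> 'e topology \<Rightarrow> 'b topology \<Rightarrow> ('e \<Rightarrow> 'b) \<Rightarrow> bool" where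
  "fibration_wrt _ E B p \<longleftrightarrow> continuous_map E B p \<and> (\<forall>Z :: 'z topology. hlp_wrt Z E B p)"

text \<open>Non-reduced sectional category: least k such that B is covered by k open
  sets on each of which p admits a continuous homotopy section (infinity if none).\<close>
definition secat :: "'e topology \<Rightarrow> 'b topology \<Rightarrow> ('e \<Rightarrow> 'b) \<Rightarrow> enat" where
  "secat E B p = Inf (enat ` {k. \<exists>U :: nat \<Rightarrow> 'b set.
      (\<Union>i<k. U i) = topspace B \<and>
      (\<forall>i<k. openin B (U i) \<and>
         (\<exists>s. continuous_map (subtopology B (U i)) E s \<and>
              homotopic_with (\<lambda>_. True) (subtopology B (U i)) B (p \<circ> s) id))})"

text \<open>Points of M^G_n(X): pairs (alpha, gs), alpha_0..alpha_(n-1) paths,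
  gs_0..gs_(n-2) group elements, with alpha_i(0) gs_i = alpha_(i+1)(0).\<close>
definition MG :: "('g, 'b) monoid_scheme \<Rightarrow> 'a topology \<Rightarrow> ('a \<Rightarrow> 'g \<Rightarrow> 'a) \<Rightarrow> nat
                   \<Rightarrow> ((nat \<Rightarrow> real \<Rightarrow> 'a) \<times> (nat \<Rightarrow> 'g)) topology" where
  "MG G X act n = subtopology
     (prod_topology (product_topology (\<lambda>i. path_space X) {..<n})
                    (product_topology (\<lambda>i. discrete_topology (carrier G)) {..<n-1}))
     {(\<alpha>, gs). \<forall>i < n-1. act (\<alpha> i 0) (gs i) = \<alpha> (Suc i) 0}"

definition powX :: "'a topology \<Rightarrow> nat \<Rightarrow> (nat \<Rightarrow> 'a) topology" where
  "powX X n = product_topology (\<lambda>i. X) {..<n}"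

definition eval_map :: "nat \<Rightarrow> (nat \<Rightarrow> real \<Rightarrow> 'a) \<times> (nat \<Rightarrow> 'g) \<Rightarrow> (nat \<Rightarrow> 'a)" where
  "eval_map n = (\<lambda>(\<alpha>, gs). \<lambda>i\<in>{..<n}. \<alpha> i 1)"

definition XG :: "('g, 'b) monoid_scheme \<Rightarrow> 'a topology \<Rightarrow> nat \<Rightarrow> ('a \<times> (nat \<Rightarrow> 'g)) topology" where
  "XG G X n = prod_topology X (product_topology (\<lambda>i. discrete_topology (carrier G)) {..<n-1})"

definition sat_diag :: "('g, 'b) monoid_scheme \<Rightarrow> ('a \<Rightarrow> 'g \<Rightarrow> 'a) \<Rightarrow> nat
                        \<Rightarrow> 'a \<times> (nat \<Rightarrow> 'g) \<Rightarrow> (nat \<Rightarrow> 'a)" where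
  "sat_diag G act n = (\<lambda>(x, gs). \<lambda>i\<in>{..<n}. act x (gprod G gs i))"

end

theory Submission
  imports Defs
begin

abbreviation I01 :: "real topology" where "I01 \<equiv> top_of_set {0..1::real}"

lemma topspace_path_space: "topspace (path_space X) = paths_of X"
  unfolding path_space_def topology_generated_by_topspace
proof
  show "paths_of X \<subseteq> \<Union> {{g \<in> paths_of X. g ` K \<subseteq> U} |K U. compactin I01 K \<and> openin X U}"
  proof
    fix g assume g: "g \<in> paths_of X"
    have "g \<in> {h \<in> paths_of X. h ` {} \<subseteq> topspace X}" using g by simp
    moreover have "compactin I01 ({}::real set)" by simp
    ultimately show "g \<in> \<Union> {{g \<in> paths_of X. g ` K \<subseteq> U} |K U. compactin I01 K \<and> openin X U}"
      by blast
  qed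
qed (use openin_subset in blast)

lemma paths_ofD:
  assumes "g \<in> paths_of X"
  shows "continuous_map I01 X g" "\<And>t. t \<in> {0..1} \<Longrightarrow> g t \<in> topspace X"
    "\<And>t. t \<notin> {0..1} \<Longrightarrow> g t = undefined"
  using assms unfolding paths_of_def pathin_def
  by (auto simp: continuous_map_def Pi_iff)

lemma continuous_into_path_space:
  assumes P: "\<And>y. y \<in> topspace Y \<Longrightarrow> f y \<in> paths_of X"
    and O: "\<And>K U. compactin I01 K \<Longrightarrow> openin X U \<Longrightarrow> openin Y {y \<in> topspace Y. f y ` K \<subseteq> U}"
  shows "continuous_map Y (path_space X) f"
  unfolding path_space_def
proof (rule continuous_on_generated_topo)
  fix W assume "W \<in> {{g \<in> paths_of X. g ` K \<subseteq> U} |K U. compactin I01 K \<and> openin X U}"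
  then obtain K U where KU: "compactin I01 K" "openin X U" "W = {g \<in> paths_of X. g ` K \<subseteq> U}" by blast
  have "f -` W \<inter> topspace Y = {y \<in> topspace Y. f y ` K \<subseteq> U}" using P KU(3) by auto
  then show "openin Y (f -` W \<inter> topspace Y)" using O[OF KU(1,2)] by simp
next
  show "f ` topspace Y \<subseteq> \<Union> {{g \<in> paths_of X. g ` K \<subseteq> U} |K U. compactin I01 K \<and> openin X U}"
  proof -
    have "f ` topspace Y \<subseteq> topspace (path_space X)"
      unfolding topspace_path_space by (rule image_subsetI) (rule P)
    then show ?thesis unfolding path_space_def topology_generated_by_topspace .
  qed
qed

lemma subbasic_open:
  assumes "compactin I01 K" "openin X U"
  shows "openin (path_space X) {g \<in> paths_of X. g ` K \<subseteq> U}"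
  unfolding path_space_def
  apply (rule topology_generated_by_Basis, rule CollectI, rule exI[of _ K], rule exI[of _ U])
  using assms by simp

lemma continuous_eval_fixed:
  assumes t: "t \<in> {0..1}"
  shows "continuous_map (path_space X) X (\<lambda>g. g t)"
  unfolding continuous_map_def topspace_path_space
proof (intro conjI allI impI)
  show "(\<lambda>g. g t) \<in> paths_of X \<rightarrow> topspace X" using paths_ofD(2) t by blast
  fix U assume U: "openin X U"
  have "{x \<in> paths_of X. x t \<in> U} = {g \<in> paths_of X. g ` {t} \<subseteq> U}" by auto
  moreover have "compactin I01 {t}" using t by simp
  ultimately show "openin (path_space X) {x \<in> paths_of X. x t \<in> U}"
    using subbasic_open[OF _ U] by presburger
qed

lemma continuous_eval_joint:
  "continuous_map (prod_topology (path_space X) I01) X (\<lambda>p. fst p (snd p))"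
  unfolding continuous_map_def
proof (intro conjI allI impI)
  show "(\<lambda>p. fst p (snd p)) \<in> topspace (prod_topology (path_space X) I01) \<rightarrow> topspace X"
    by (force simp: topspace_path_space intro: paths_ofD(2))
  fix U assume U: "openin X U"
  show "openin (prod_topology (path_space X) I01)
          {x \<in> topspace (prod_topology (path_space X) I01). fst x (snd x) \<in> U}"
    (is "openin ?T ?S")
  proof (subst openin_subopen, intro ballI)
    fix p assume p: "p \<in> ?S"
    obtain g t where pe: "p = (g, t)" by fastforce
    have g: "g \<in> paths_of X" and t: "t \<in> {0..1}" and gt: "g t \<in> U"
      using p pe by (auto simp: topspace_path_space)
    have "openin I01 {s \<in> topspace I01. g s \<in> U}"
      using paths_ofD(1)[OF g] U openin_continuous_map_preimage by blast
    then have "\<exists>e>0. \<forall>s\<in>{0..1}. dist s t < e \<longrightarrow> s \<in> {s \<in> topspace I01. g s \<in> U}"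
      unfolding openin_euclidean_subtopology_iff using t gt by simp
    then obtain e where e: "e > 0" "\<And>s. s \<in> {0..1} \<Longrightarrow> dist s t < e \<Longrightarrow> g s \<in> U"
      by auto
    define K where "K = {max 0 (t - e/2)..min 1 (t + e/2)}"
    define V where "V = {0..1} \<inter> {t - e/2<..<t + e/2}"
    have Ksub: "K \<subseteq> {0..1}" unfolding K_def by auto
    have cK: "compactin I01 K" using Ksub by (simp add: compactin_subtopology K_def)
    have gK: "g ` K \<subseteq> U"
    proof
      fix y assume "y \<in> g ` K"
      then obtain s where s: "s \<in> K" "y = g s" by blast
      have "dist s t < e" using s(1) e(1) unfolding K_def dist_real_def by auto
      then show "y \<in> U" using e(2) s Ksub by blast
    qed
    have oV: "openin I01 V" unfolding V_def by (rule openin_open_Int) auto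
    have VK: "V \<subseteq> K" unfolding V_def K_def by auto
    let ?N = "{h \<in> paths_of X. h ` K \<subseteq> U} \<times> V"
    have "openin ?T ?N"
      using subbasic_open[OF cK U] oV by (simp add: openin_prod_Times_iff)
    moreover have "p \<in> ?N" unfolding pe using g gK t e(1) by (simp add: V_def)
    moreover have "?N \<subseteq> ?S"
    proof
      fix q assume q: "q \<in> ?N"
      then obtain h s where qe: "q = (h, s)" and h: "h \<in> paths_of X" "h ` K \<subseteq> U" and s: "s \<in> V"
        by blast
      have "s \<in> K" using s VK by blast
      then have "h s \<in> U" using h(2) by blast
      moreover have "s \<in> {0..1}" using s V_def by blast
      ultimately show "q \<in> ?S" using qe h(1) by (simp add: topspace_path_space)
    qed
    ultimately show "\<exists>T. openin ?T T \<and> p \<in> T \<and> T \<subseteq> ?S" by (intro exI[of _ ?N] conjI)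
  qed
qed

lemma continuous_curry_path:
  assumes F: "continuous_map (prod_topology Y I01) X F"
  shows "continuous_map Y (path_space X) (\<lambda>y. \<lambda>s. if s \<in> {0..1} then F (y, s) else undefined)"
proof (rule continuous_into_path_space)
  fix y assume y: "y \<in> topspace Y"
  have c1: "continuous_map I01 X (\<lambda>s. F (y, s))"
  proof -
    have "continuous_map I01 (prod_topology Y I01) (\<lambda>s. (y, s))"
      by (rule continuous_map_pairedI) (use y in \<open>simp_all add: continuous_map_const\<close>)
    from continuous_map_compose[OF this F] show ?thesis by (simp add: o_def)
  qed
  have "continuous_map I01 X (\<lambda>s. if s \<in> {0..1} then F (y, s) else undefined)"
    by (rule continuous_map_eq[OF c1]) auto
  then show "(\<lambda>s. if s \<in> {0..1} then F (y, s) else undefined) \<in> paths_of X"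
    unfolding paths_of_def pathin_def by auto
next
  fix K U assume K: "compactin I01 K" and U: "openin X U"
  have Ksub: "K \<subseteq> {0..1}" using compactin_subset_topspace[OF K] by simp
  let ?S = "{y \<in> topspace Y. (\<lambda>s. if s \<in> {0..1} then F (y, s) else undefined) ` K \<subseteq> U}"
  have Seq: "?S = {y \<in> topspace Y. \<forall>s\<in>K. F (y, s) \<in> U}" 
  proof (rule Collect_cong, rule conj_cong[OF refl])
    fix y
    have "\<And>s. s \<in> K \<Longrightarrow> (if s \<in> {0..1} then F (y, s) else undefined) = F (y, s)"
      using Ksub by auto
    then show "((\<lambda>s. if s \<in> {0..1} then F (y, s) else undefined) ` K \<subseteq> U) = (\<forall>s\<in>K. F (y, s) \<in> U)"
      by (simp add: image_subset_iff)
  qed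
  have W: "openin (prod_topology Y I01) {p \<in> topspace (prod_topology Y I01). F p \<in> U}"
    by (rule openin_continuous_map_preimage[OF F U])
  show "openin Y ?S" unfolding Seq
  proof (subst openin_subopen, intro ballI)
    fix y assume y: "y \<in> {y \<in> topspace Y. \<forall>s\<in>K. F (y, s) \<in> U}"
    have yt: "y \<in> topspace Y" using y by blast
    have sub: "{y} \<times> K \<subseteq> {p \<in> topspace (prod_topology Y I01). F p \<in> U}"
    proof
      fix q assume "q \<in> {y} \<times> K"
      then obtain s where q: "q = (y, s)" "s \<in> K" by blast
      have s01: "s \<in> {0..1}" using q(2) Ksub by blast
      have "F (y, s) \<in> U" using y q(2) by blast
      then show "q \<in> {p \<in> topspace (prod_topology Y I01). F p \<in> U}"
        unfolding q(1) using yt s01 by simp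
    qed
    have "\<exists>A B. openin Y A \<and> openin I01 B \<and> y \<in> A \<and> K \<subseteq> B \<and>
       A \<times> B \<subseteq> {p \<in> topspace (prod_topology Y I01). F p \<in> U}"
      using tube_lemma_right[OF W K yt sub] .
    then obtain A B where AB: "openin Y A" "openin I01 B" "y \<in> A" "K \<subseteq> B"
      "A \<times> B \<subseteq> {p \<in> topspace (prod_topology Y I01). F p \<in> U}"
      by blast
    have "A \<subseteq> {y \<in> topspace Y. \<forall>s\<in>K. F (y, s) \<in> U}"
    proof
      fix a assume a: "a \<in> A"
      have "a \<in> topspace Y" using a AB(1) openin_subset by blast
      moreover have "F (a, s) \<in> U" if "s \<in> K" for s
      proof -
        have "(a, s) \<in> A \<times> B" using a that AB(4) by blast
        then show ?thesis using AB(5) by blast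
      qed
      ultimately show "a \<in> {y \<in> topspace Y. \<forall>s\<in>K. F (y, s) \<in> U}" by blast
    qed
    then show "\<exists>T. openin Y T \<and> y \<in> T \<and> T \<subseteq> {y \<in> topspace Y. \<forall>s\<in>K. F (y, s) \<in> U}"
      using AB(1,3) by blast
  qed
qed

lemma continuous_curry_path2:
  assumes F: "continuous_map (prod_topology Y I01) X (\<lambda>q. F2 (fst q) (snd q))"
  shows "continuous_map Y (path_space X) (\<lambda>y. \<lambda>s. if s \<in> {0..1} then F2 y s else undefined)"
proof -
  have e: "(\<lambda>y s. if s \<in> {0..1} then F2 (fst (y, s)) (snd (y, s)) else undefined)
       = (\<lambda>y s. if s \<in> {0..1} then F2 y s else undefined)" by (intro ext) simp
  show ?thesis using continuous_curry_path[OF F] unfolding e .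
qed

lemma product_discrete_finite:
  assumes "finite I"
  shows "product_topology (\<lambda>i. discrete_topology S) I = discrete_topology (PiE I (\<lambda>_. S))"
proof -
  have "openin (product_topology (\<lambda>i. discrete_topology S) I) {f}" if f: "f \<in> PiE I (\<lambda>_. S)" for f
  proof -
    have "{f} = PiE I (\<lambda>i. {f i})" using f by (auto simp: PiE_iff extensional_def fun_eq_iff) (metis)
    moreover have "openin (product_topology (\<lambda>i. discrete_topology S) I) (PiE I (\<lambda>i. {f i}))"
      using assms f by (subst openin_PiE_gen) (auto simp: PiE_iff)
    ultimately show ?thesis by simp
  qed
  then show ?thesis by (subst eq_commute) (simp add: discrete_topology_unique)
qed

lemma continuous_from_discrete_factor:
  assumes "\<And>d. d \<in> D \<Longrightarrow> continuous_map X Y (\<lambda>x. F x d)"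
  shows "continuous_map (prod_topology X (discrete_topology D)) Y (\<lambda>p. F (fst p) (snd p))"
  unfolding continuous_map_def
proof (intro conjI allI impI)
  show "(\<lambda>p. F (fst p) (snd p)) \<in> topspace (prod_topology X (discrete_topology D)) \<rightarrow> topspace Y"
    using assms by (force simp: continuous_map_def Pi_iff)
  fix V assume V: "openin Y V"
  have eq: "{p \<in> topspace (prod_topology X (discrete_topology D)). F (fst p) (snd p) \<in> V}
     = (\<Union>d\<in>D. {x \<in> topspace X. F x d \<in> V} \<times> {d})" by auto
  show "openin (prod_topology X (discrete_topology D))
          {p \<in> topspace (prod_topology X (discrete_topology D)). F (fst p) (snd p) \<in> V}"
    unfolding eq
  proof (rule openin_Union, clarify)
    fix d assume d: "d \<in> D"
    have "openin X {x \<in> topspace X. F x d \<in> V}"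
      using assms[OF d] V openin_continuous_map_preimage by blast
    then show "openin (prod_topology X (discrete_topology D)) ({x \<in> topspace X. F x d \<in> V} \<times> {d})"
      using d by (simp add: openin_prod_Times_iff)
  qed
qed

lemma MG_top:
  "(\<alpha>, gs) \<in> topspace (MG G X act n) \<longleftrightarrow>
     \<alpha> \<in> PiE {..<n} (\<lambda>_. paths_of X) \<and> gs \<in> PiE {..<n-1} (\<lambda>_. carrier G) \<and>
     (\<forall>i<n-1. act (\<alpha> i 0) (gs i) = \<alpha> (Suc i) 0)"
  by (simp add: MG_def topspace_path_space topspace_product_topology)

lemma cont_MG_path:
  assumes "k < n"
  shows "continuous_map (MG G X act n) (path_space X) (\<lambda>x. fst x k)"
  unfolding MG_def
  apply (rule continuous_map_from_subtopology)
  using continuous_map_compose[OF continuous_map_fst continuous_map_product_projection[of k "{..<n}" "\<lambda>i. path_space X"]] assms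
  by (simp add: o_def)

lemma cont_MG_snd:
  "continuous_map (MG G X act n) (product_topology (\<lambda>i. discrete_topology (carrier G)) {..<n-1}) snd"
  unfolding MG_def
  by (rule continuous_map_from_subtopology) (rule continuous_map_snd)

lemma eval_map_eq: "eval_map n x = (\<lambda>i\<in>{..<n}. fst x i 1)"
  by (cases x) (simp add: eval_map_def)

lemma cont_eval_map: "continuous_map (MG G X act n) (powX X n) (eval_map n)"
  unfolding powX_def continuous_map_componentwise
proof (intro conjI ballI)
  show "eval_map n ` topspace (MG G X act n) \<subseteq> extensional {..<n}"
    by (auto simp: eval_map_eq)
  fix k assume k: "k \<in> {..<n}"
  have "continuous_map (MG G X act n) X ((\<lambda>g. g 1) \<circ> (\<lambda>x. fst x k))"
    by (rule continuous_map_compose[OF cont_MG_path continuous_eval_fixed]) (use k in auto)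
  then show "continuous_map (MG G X act n) X (\<lambda>x. eval_map n x k)"
    by (rule continuous_map_eq) (use k in \<open>simp add: eval_map_eq\<close>)
qed

lemma gprod_carrier:
  assumes "group G" "\<And>j. j < i \<Longrightarrow> gs j \<in> carrier G"
  shows "gprod G gs i \<in> carrier G"
  using assms(2)
proof (induction i)
  case 0 then show ?case using assms(1) by (simp add: group.is_monoid monoid.one_closed)
next
  case (Suc i) then show ?case using assms(1) by (simp add: group.is_monoid monoid.m_closed)
qed

lemma MG_start:
  assumes ra: "right_action G X act" and x: "(\<alpha>, gs) \<in> topspace (MG G X act n)" and i: "i < n"
  shows "\<alpha> i 0 = act (\<alpha> 0 0) (gprod G gs i)"
  using i
proof (induction i)
  case 0
  have "\<alpha> 0 \<in> paths_of X" using x 0 by (auto simp: MG_top)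
  then have "\<alpha> 0 0 \<in> topspace X" using paths_ofD(2)[of "\<alpha> 0" X 0] by simp
  then show ?case using ra by (simp add: right_action_def)
next
  case (Suc i)
  have grp: "group G" using ra by (simp add: right_action_def)
  have gs: "\<And>j. j < n - 1 \<Longrightarrow> gs j \<in> carrier G" using x by (auto simp: MG_top)
  have con: "act (\<alpha> i 0) (gs i) = \<alpha> (Suc i) 0" using x Suc.prems by (auto simp: MG_top)
  have "\<alpha> 0 \<in> paths_of X" using x Suc.prems by (auto simp: MG_top)
  then have x0: "\<alpha> 0 0 \<in> topspace X" using paths_ofD(2)[of "\<alpha> 0" X 0] by simp
  have gp: "gprod G gs i \<in> carrier G" using gprod_carrier[OF grp, of i gs] gs Suc.prems by auto
  have gi: "gs i \<in> carrier G" using gs Suc.prems by auto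
  have "\<alpha> (Suc i) 0 = act (act (\<alpha> 0 0) (gprod G gs i)) (gs i)"
    using con Suc by simp
  also have "\<dots> = act (\<alpha> 0 0) (gprod G gs (Suc i))"
    using ra x0 gp gi by (simp add: right_action_def)
  finally show ?case .
qed

lemma aux2:
  fixes a b :: real
  assumes "0 \<le> a" "a \<le> 1" "0 \<le> b" "b \<le> 1"
  shows "a * (1 + b) \<le> 2"
proof -
  have "a * (1 + b) \<le> 1 * (1 + b)" by (rule mult_right_mono) (use assms in auto)
  then have "a * (1 + b) \<le> 1 + b" by simp
  then show ?thesis using assms by linarith
qed

lemma hlp_piece:
  fixes Z :: "'z topology"
  assumes f: "continuous_map Z (MG G X act n) f"
    and H: "continuous_map (prod_topology Z I01) (powX X n) H"
    and H0: "\<And>z. z \<in> topspace Z \<Longrightarrow> H (z, 0) = eval_map n (f z)"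
    and i: "i < n"
  shows "continuous_map (prod_topology (prod_topology Z I01) I01) X
     (\<lambda>q. if snd q * (1 + snd (fst q)) \<le> 1 then fst (f (fst (fst q))) i (snd q * (1 + snd (fst q)))
          else H (fst (fst q), snd q * (1 + snd (fst q)) - 1) i)"
proof -
  let ?T = "prod_topology (prod_topology Z I01) I01"
  let ?P = "\<lambda>q::('z \<times> real) \<times> real. snd q * (1 + snd (fst q))"
  have incl: "continuous_map I01 euclideanreal id"
    by (rule continuous_map_from_subtopology[OF continuous_map_id])
  have rs: "continuous_map ?T euclideanreal snd"
    using continuous_map_compose[OF continuous_map_snd incl] by (simp add: o_def id_def)
  have rt0: "continuous_map ?T I01 (\<lambda>q. snd (fst q))"
    using continuous_map_compose[OF continuous_map_fst continuous_map_snd] by (simp add: o_def)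
  have rt: "continuous_map ?T euclideanreal (\<lambda>q. snd (fst q))"
    using continuous_map_compose[OF rt0 incl] by (simp add: o_def id_def)
  have rz: "continuous_map ?T Z (\<lambda>q. fst (fst q))"
    using continuous_map_compose[OF continuous_map_fst continuous_map_fst] by (simp add: o_def)
  have contP: "continuous_map ?T euclideanreal ?P"
    by (intro continuous_map_real_mult rs continuous_map_add rt continuous_map_const[THEN iffD2]) simp
  have bnd: "0 \<le> snd q \<and> snd q \<le> 1 \<and> 0 \<le> snd (fst q) \<and> snd (fst q) \<le> 1 \<and> fst (fst q) \<in> topspace Z"
    if "q \<in> topspace ?T" for q
    using that by auto
  have P0: "0 \<le> ?P q" if "q \<in> topspace ?T" for q
    using bnd[OF that] by simp
  have P2: "?P q \<le> 2" if "q \<in> topspace ?T" for q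
    using bnd[OF that] aux2[of "snd q" "snd (fst q)"] by blast
  have fpath: "continuous_map Z (path_space X) (\<lambda>z. fst (f z) i)"
    using continuous_map_compose[OF f cont_MG_path[OF i]] by (simp add: o_def)
  have contf: "continuous_map (subtopology ?T {q \<in> topspace ?T. ?P q \<le> 1}) X
                 (\<lambda>q. fst (f (fst (fst q))) i (?P q))"
  proof -
    have a: "continuous_map (subtopology ?T {q \<in> topspace ?T. ?P q \<le> 1}) (path_space X)
               (\<lambda>q. fst (f (fst (fst q))) i)"
      using continuous_map_from_subtopology[OF continuous_map_compose[OF rz fpath]] by (simp add: o_def)
    have b: "continuous_map (subtopology ?T {q \<in> topspace ?T. ?P q \<le> 1}) I01 ?P"
      unfolding continuous_map_in_subtopology
      using continuous_map_from_subtopology[OF contP] P0 by auto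
    have "continuous_map (subtopology ?T {q \<in> topspace ?T. ?P q \<le> 1}) X
            ((\<lambda>p. fst p (snd p)) \<circ> (\<lambda>q. (fst (f (fst (fst q))) i, ?P q)))"
      by (rule continuous_map_compose[OF continuous_map_pairedI[OF a b] continuous_eval_joint])
    then show ?thesis by (simp add: o_def)
  qed
  have contg: "continuous_map (subtopology ?T {q \<in> topspace ?T. 1 \<le> ?P q}) X
                 (\<lambda>q. H (fst (fst q), ?P q - 1) i)"
  proof -
    have a: "continuous_map (subtopology ?T {q \<in> topspace ?T. 1 \<le> ?P q}) Z (\<lambda>q. fst (fst q))"
      using continuous_map_from_subtopology[OF rz] .
    have b: "continuous_map (subtopology ?T {q \<in> topspace ?T. 1 \<le> ?P q}) I01 (\<lambda>q. ?P q - 1)"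
      unfolding continuous_map_in_subtopology
    proof
      show "continuous_map (subtopology ?T {q \<in> topspace ?T. 1 \<le> ?P q}) euclideanreal (\<lambda>q. ?P q - 1)"
        by (intro continuous_map_diff continuous_map_from_subtopology[OF contP]) simp
      show "(\<lambda>q. ?P q - 1) \<in> topspace (subtopology ?T {q \<in> topspace ?T. 1 \<le> ?P q}) \<rightarrow> {0..1}"
        using P2 by fastforce
    qed
    have c: "continuous_map (powX X n) X (\<lambda>x. x i)"
      unfolding powX_def using continuous_map_product_projection[of i "{..<n}" "\<lambda>_. X"] i by simp
    have "continuous_map (subtopology ?T {q \<in> topspace ?T. 1 \<le> ?P q}) X
           ((\<lambda>x. x i) \<circ> H \<circ> (\<lambda>q. (fst (fst q), ?P q - 1)))"
      by (rule continuous_map_compose[OF continuous_map_pairedI[OF a b] continuous_map_compose[OF H c]])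
    then show ?thesis by (simp add: o_def)
  qed
  show ?thesis
  proof (rule continuous_map_cases_le[OF contP continuous_map_const[THEN iffD2]])
    show "continuous_map (subtopology ?T {x \<in> topspace ?T. ?P x \<le> 1}) X (\<lambda>q. fst (f (fst (fst q))) i (?P q))"
      using contf .
    show "continuous_map (subtopology ?T {x \<in> topspace ?T. 1 \<le> ?P x}) X (\<lambda>q. H (fst (fst q), ?P q - 1) i)"
      using contg .
    fix q assume q: "q \<in> topspace ?T" and e: "?P q = 1"
    have "H (fst (fst q), 0) = eval_map n (f (fst (fst q)))" using H0 bnd[OF q] by blast
    then show "fst (f (fst (fst q))) i (?P q) = H (fst (fst q), ?P q - 1) i"
      using e i by (simp add: eval_map_eq)
  qed simp
qed

lemma hlp_eval:
  fixes Z :: "'z topology"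
  shows "hlp_wrt Z (MG G X act n) (powX X n) (eval_map n)"
  unfolding hlp_wrt_def
proof (intro allI impI, elim conjE)
  fix f H
  assume f: "continuous_map Z (MG G X act n) f"
    and H: "continuous_map (prod_topology Z I01) (powX X n) H"
    and H0': "\<forall>z\<in>topspace Z. H (z, 0) = eval_map n (f z)"
  have H0: "\<And>z. z \<in> topspace Z \<Longrightarrow> H (z, 0) = eval_map n (f z)" using H0' by blast
  define F where "F i q = (if snd q * (1 + snd (fst q)) \<le> 1 then fst (f (fst (fst q))) i (snd q * (1 + snd (fst q)))
          else H (fst (fst q), snd q * (1 + snd (fst q)) - 1) i)" for i q
  define K where "K p = ((\<lambda>i\<in>{..<n}. \<lambda>s. if s \<in> {0..1} then F i (p, s) else undefined), snd (f (fst p)))"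
    for p
  have fz: "fst (f z) \<in> PiE {..<n} (\<lambda>_. paths_of X) \<and> snd (f z) \<in> PiE {..<n-1} (\<lambda>_. carrier G) \<and>
     (\<forall>i<n-1. act (fst (f z) i 0) (snd (f z) i) = fst (f z) (Suc i) 0)" if z: "z \<in> topspace Z" for z
  proof -
    have "f z \<in> topspace (MG G X act n)" using f z by (simp add: continuous_map_def Pi_iff)
    then show ?thesis using MG_top[of "fst (f z)" "snd (f z)" G X act n] by simp
  qed
  have Hz: "H (z, t) \<in> PiE {..<n} (\<lambda>_. topspace X)" if "z \<in> topspace Z" "t \<in> {0..1}" for z t
  proof -
    have "(z, t) \<in> topspace (prod_topology Z I01)" using that by simp
    then show ?thesis using H by (simp add: continuous_map_def Pi_iff powX_def topspace_product_topology)
  qed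
  have Fk: "continuous_map (prod_topology (prod_topology Z I01) I01) X (F k)" if k: "k < n" for k
    unfolding F_def by (rule hlp_piece[OF f H H0 k])
  show "\<exists>K. continuous_map (prod_topology Z I01) (MG G X act n) K \<and>
            (\<forall>z\<in>topspace Z. K (z, 0) = f z) \<and>
            (\<forall>z\<in>topspace Z. \<forall>t\<in>{0..1}. eval_map n (K (z, t)) = H (z, t))"
  proof (intro exI conjI ballI)
    show "continuous_map (prod_topology Z I01) (MG G X act n) K"
      unfolding MG_def continuous_map_in_subtopology continuous_map_pairwise
    proof (intro conjI)
      show "continuous_map (prod_topology Z I01) (product_topology (\<lambda>i. path_space X) {..<n}) (fst \<circ> K)"
        unfolding continuous_map_componentwise
      proof (intro conjI ballI)
        show "(fst \<circ> K) ` topspace (prod_topology Z I01) \<subseteq> extensional {..<n}"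
          by (auto simp: K_def)
        fix k assume k: "k \<in> {..<n}"
        have "continuous_map (prod_topology Z I01) (path_space X)
                 (\<lambda>y. \<lambda>s. if s \<in> {0..1} then F k (y, s) else undefined)"
          by (rule continuous_curry_path[OF Fk]) (use k in simp)
        then show "continuous_map (prod_topology Z I01) (path_space X) (\<lambda>x. (fst \<circ> K) x k)"
          using k by (simp add: K_def o_def)
      qed
      show "continuous_map (prod_topology Z I01) (product_topology (\<lambda>i. discrete_topology (carrier G)) {..<n - 1}) (snd \<circ> K)"
        using continuous_map_compose[OF continuous_map_fst continuous_map_compose[OF f cont_MG_snd]]
        by (simp add: K_def o_def)
      show "K \<in> topspace (prod_topology Z I01) \<rightarrow> {(\<alpha>, gs). \<forall>i<n - 1. act (\<alpha> i 0) (gs i) = \<alpha> (Suc i) 0}"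
      proof
        fix p assume p: "p \<in> topspace (prod_topology Z I01)"
        then have z: "fst p \<in> topspace Z" by auto
        have F0: "F i (p, 0) = fst (f (fst p)) i 0" for i by (simp add: F_def)
        show "K p \<in> {(\<alpha>, gs). \<forall>i<n - 1. act (\<alpha> i 0) (gs i) = \<alpha> (Suc i) 0}"
          using fz[OF z] by (auto simp: K_def F0)
      qed
    qed
  next
    fix z assume z: "z \<in> topspace Z"
    obtain \<alpha> gs where fe: "f z = (\<alpha>, gs)" by fastforce
    have a: "\<alpha> \<in> PiE {..<n} (\<lambda>_. paths_of X)" using fz[OF z] fe by simp
    have "(\<lambda>i\<in>{..<n}. \<lambda>s. if s \<in> {0..1} then F i ((z, 0), s) else undefined) = \<alpha>"
    proof (rule ext)
      fix i show "(\<lambda>i\<in>{..<n}. \<lambda>s. if s \<in> {0..1} then F i ((z, 0), s) else undefined) i = \<alpha> i"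
      proof (cases "i < n")
        case True
        then have ai: "\<alpha> i \<in> paths_of X" using a by auto
        show ?thesis
        proof (rule ext)
          fix s show "(\<lambda>i\<in>{..<n}. \<lambda>s. if s \<in> {0..1} then F i ((z, 0), s) else undefined) i s = \<alpha> i s"
            using True paths_ofD(3)[OF ai, of s] by (auto simp: F_def fe)
        qed
      next
        case False then show ?thesis using a by (auto simp: PiE_iff extensional_def)
      qed
    qed
    then show "K (z, 0) = f z" by (simp add: K_def fe)
  next
    fix z and t :: real assume z: "z \<in> topspace Z" and t: "t \<in> {0..1}"
    have "(\<lambda>i\<in>{..<n}. F i ((z, t), 1)) = H (z, t)"
    proof (rule ext)
      fix i show "(\<lambda>i\<in>{..<n}. F i ((z, t), 1)) i = H (z, t) i"
      proof (cases "i < n")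
        case True
        show ?thesis
        proof (cases "t = 0")
          case True
          then show ?thesis using H0[OF z] \<open>i < n\<close> by (simp add: F_def eval_map_eq)
        next
          case False
          then have "\<not> 1 + t \<le> 1" using t by auto
          then show ?thesis using \<open>i < n\<close> by (simp add: F_def)
        qed
      next
        case False then show ?thesis using Hz[OF z t] by (auto simp: PiE_iff extensional_def)
      qed
    qed
    moreover have "eval_map n (K (z, t)) = (\<lambda>i\<in>{..<n}. F i ((z, t), 1))"
      unfolding eval_map_eq K_def fst_conv by (rule restrict_ext) simp
    ultimately show "eval_map n (K (z, t)) = H (z, t)" by simp
  qed
qed

lemma sec_transfer:
  assumes phi: "continuous_map E E' \<phi>" and hom: "homotopic_with (\<lambda>_. True) E B (p' \<circ> \<phi>) p"
    and ex: "\<exists>s. continuous_map (subtopology B V) E s \<and> homotopic_with (\<lambda>_. True) (subtopology B V) B (p \<circ> s) id"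
  shows "\<exists>s. continuous_map (subtopology B V) E' s \<and> homotopic_with (\<lambda>_. True) (subtopology B V) B (p' \<circ> s) id"
proof -
  obtain s where s: "continuous_map (subtopology B V) E s"
    and hs: "homotopic_with (\<lambda>_. True) (subtopology B V) B (p \<circ> s) id" using ex by blast
  have "homotopic_with (\<lambda>_. True) (subtopology B V) B ((p' \<circ> \<phi>) \<circ> s) (p \<circ> s)"
    by (rule homotopic_with_compose_continuous_map_right[OF hom s]) simp
  then have "homotopic_with (\<lambda>_. True) (subtopology B V) B (p' \<circ> (\<phi> \<circ> s)) id"
    using homotopic_with_trans[OF _ hs] by (simp add: o_assoc)
  moreover have "continuous_map (subtopology B V) E' (\<phi> \<circ> s)"
    by (rule continuous_map_compose[OF s phi])
  ultimately show ?thesis by blast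
qed

lemma secat_eq_transfer:
  assumes "continuous_map E E' \<phi>" "homotopic_with (\<lambda>_. True) E B (p' \<circ> \<phi>) p"
    and "continuous_map E' E \<psi>" "homotopic_with (\<lambda>_. True) E' B (p \<circ> \<psi>) p'"
  shows "secat E B p = secat E' B p'"
proof -
  have eq: "(\<exists>s. continuous_map (subtopology B V) E s \<and> homotopic_with (\<lambda>_. True) (subtopology B V) B (p \<circ> s) id)
    \<longleftrightarrow> (\<exists>s. continuous_map (subtopology B V) E' s \<and> homotopic_with (\<lambda>_. True) (subtopology B V) B (p' \<circ> s) id)"
    for V
    using sec_transfer[OF assms(1,2), of V] sec_transfer[OF assms(3,4), of V] by blast
  show ?thesis unfolding secat_def by (simp only: eq)
qed

lemma phi_cont:
  assumes "0 < n"
  shows "continuous_map (MG G X act n) (XG G X n) (\<lambda>x. (fst x 0 0, snd x))"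
  unfolding XG_def
proof (rule continuous_map_pairedI)
  show "continuous_map (MG G X act n) X (\<lambda>x. fst x 0 0)"
    using continuous_map_compose[OF cont_MG_path[OF assms] continuous_eval_fixed[of 0]] by (simp add: o_def)
  show "continuous_map (MG G X act n) (product_topology (\<lambda>i. discrete_topology (carrier G)) {..<n - 1}) snd"
    by (rule cont_MG_snd)
qed

lemma psi_mem:
  fixes G :: "('g, 'b) monoid_scheme" and X :: "'a topology" and act :: "'a \<Rightarrow> 'g \<Rightarrow> 'a"
    and x :: "'a \<times> (nat \<Rightarrow> 'g)"
  assumes ra: "right_action G X act" and x: "x \<in> topspace (XG G X n)"
  shows "((\<lambda>i\<in>{..<n}. \<lambda>s::real. if s \<in> {0..1} then act (fst x) (gprod G (snd x) i) else undefined), snd x)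
          \<in> {(\<alpha>, gs). \<forall>i<n - 1. act (\<alpha> i (0::real)) (gs i) = \<alpha> (Suc i) 0}"
proof -
  have grp: "group G" using ra by (simp add: right_action_def)
  have gpc: "gprod G d i \<in> carrier G" if "d \<in> PiE {..<n-1} (\<lambda>_. carrier G)" "i < n" for d i
  proof (rule gprod_carrier[OF grp])
    fix j assume "j < i"
    then have "j \<in> {..<n-1}" using that(2) by simp
    then show "d j \<in> carrier G" by (rule PiE_mem[OF that(1)])
  qed

      have tXG: "topspace (XG G X n) = topspace X \<times> PiE {..<n-1} (\<lambda>_. carrier G)"
        by (simp add: XG_def topspace_product_topology)
      have x0: "fst x \<in> topspace X" and gs: "snd x \<in> PiE {..<n-1} (\<lambda>_. carrier G)"
        using x unfolding tXG by (simp_all add: mem_Times_iff)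
      have "act (act (fst x) (gprod G (snd x) i)) (snd x i) = act (fst x) (gprod G (snd x) (Suc i))"
        if i: "i < n - 1" for i
      proof -
        have "gprod G (snd x) i \<in> carrier G" using gpc[OF gs, of i] i by simp
        moreover have "snd x i \<in> carrier G" using PiE_mem[OF gs, of i] i by simp
        ultimately show ?thesis using ra x0 by (simp add: right_action_def)
      qed
      note hh = this
      let ?a = "\<lambda>i\<in>{..<n}. \<lambda>s::real. if s \<in> {0..1} then act (fst x) (gprod G (snd x) i) else undefined"
      have ai: "?a i 0 = act (fst x) (gprod G (snd x) i)" if "i < n" for i
        using that by simp
      have "\<forall>i<n-1. act (?a i 0) (snd x i) = ?a (Suc i) 0"
      proof (intro allI impI)
        fix i assume i: "i < n - 1"
        have i1: "i < n" "Suc i < n" using i by auto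
        show "act (?a i 0) (snd x i) = ?a (Suc i) 0"
          unfolding ai[OF i1(1)] ai[OF i1(2)] by (rule hh[OF i])
      qed
      then show ?thesis
        unfolding mem_Collect_eq prod.case .
qed

lemma psi_cont:
  assumes ra: "right_action G X act"
  shows "continuous_map (XG G X n) (MG G X act n)
     (\<lambda>x. ((\<lambda>i\<in>{..<n}. \<lambda>s. if s \<in> {0..1} then act (fst x) (gprod G (snd x) i) else undefined), snd x))"
proof -
  have grp: "group G" using ra by (simp add: right_action_def)
  have XGd: "XG G X n = prod_topology X (discrete_topology (PiE {..<n-1} (\<lambda>_. carrier G)))"
    unfolding XG_def by (subst product_discrete_finite) auto
  have gpc: "gprod G d i \<in> carrier G" if "d \<in> PiE {..<n-1} (\<lambda>_. carrier G)" "i < n" for d i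
  proof (rule gprod_carrier[OF grp])
    fix j assume "j < i"
    then have "j \<in> {..<n-1}" using that(2) by simp
    then show "d j \<in> carrier G" by (rule PiE_mem[OF that(1)])
  qed
  have Ai: "continuous_map (XG G X n) X (\<lambda>x. act (fst x) (gprod G (snd x) i))" if i: "i < n" for i
    unfolding XGd
  proof (rule continuous_from_discrete_factor[where F="\<lambda>x d. act x (gprod G d i)"])
    fix d assume d: "d \<in> PiE {..<n-1} (\<lambda>_. carrier G)"
    have gd: "gprod G d i \<in> carrier G" by (rule gpc[OF d i])
    have "\<forall>g\<in>carrier G. continuous_map X X (\<lambda>x. act x g)" using ra by (simp add: right_action_def)
    then show "continuous_map X X (\<lambda>x. act x (gprod G d i))" using gd by (rule bspec)
  qed
  show ?thesis
    unfolding MG_def continuous_map_in_subtopology continuous_map_pairwise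
  proof (intro conjI)
    show "continuous_map (XG G X n) (product_topology (\<lambda>i. path_space X) {..<n})
      (fst \<circ> (\<lambda>x. ((\<lambda>i\<in>{..<n}. \<lambda>s. if s \<in> {0..1} then act (fst x) (gprod G (snd x) i) else undefined), snd x)))"
      unfolding continuous_map_componentwise
    proof (intro conjI ballI)
      fix k assume k: "k \<in> {..<n}"
      have c: "continuous_map (prod_topology (XG G X n) I01) X (\<lambda>q. act (fst (fst q)) (gprod G (snd (fst q)) k))"
        using continuous_map_compose[OF continuous_map_fst Ai[of k]] k by (simp add: o_def)
      show "continuous_map (XG G X n) (path_space X) (\<lambda>x. (fst \<circ> (\<lambda>x. ((\<lambda>i\<in>{..<n}. \<lambda>s. if s \<in> {0..1} then act (fst x) (gprod G (snd x) i) else undefined), snd x))) x k)"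
        using continuous_curry_path2[OF c] k by (simp add: o_def)
    qed (simp add: image_subset_iff)
    show "continuous_map (XG G X n) (product_topology (\<lambda>i. discrete_topology (carrier G)) {..<n - 1})
      (snd \<circ> (\<lambda>x. ((\<lambda>i\<in>{..<n}. \<lambda>s. if s \<in> {0..1} then act (fst x) (gprod G (snd x) i) else undefined), snd x)))"
      unfolding XG_def by (simp add: o_def continuous_map_snd)
  qed (rule Pi_I, rule psi_mem[OF ra], assumption)
qed

lemma eval_psi:
  "eval_map n ((\<lambda>x. ((\<lambda>i\<in>{..<n}. \<lambda>s. if s \<in> {0..1} then act (fst x) (gprod G (snd x) i) else undefined), snd x)) x)
   = sat_diag G act n x"
  unfolding eval_map_eq sat_diag_def
  by (cases x) (simp, rule restrict_ext, simp)

lemma hom_MG: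
  fixes G :: "('g, 'b) monoid_scheme" and X :: "'a topology" and act :: "'a \<Rightarrow> 'g \<Rightarrow> 'a"
  assumes ra: "right_action G X act"
  shows "homotopic_with (\<lambda>_. True) (MG G X act n) (powX X n)
     (sat_diag G act n \<circ> (\<lambda>x. (fst x 0 0, snd x))) (eval_map n)"
proof -
  let ?h = "\<lambda>p::real \<times> ((nat \<Rightarrow> real \<Rightarrow> 'a) \<times> (nat \<Rightarrow> 'g)). \<lambda>i\<in>{..<n}. fst (snd p) i (fst p)"
  have c: "continuous_map (prod_topology I01 (MG G X act n)) (powX X n) ?h"
    unfolding powX_def continuous_map_componentwise
  proof (intro conjI ballI)
    fix k assume k: "k \<in> {..<n}"
    have a: "continuous_map (prod_topology I01 (MG G X act n)) (path_space X) (\<lambda>p. fst (snd p) k)"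
      using continuous_map_compose[OF continuous_map_snd cont_MG_path[of k n G X act]] k by (simp add: o_def)
    have "continuous_map (prod_topology I01 (MG G X act n)) X
            ((\<lambda>p. fst p (snd p)) \<circ> (\<lambda>p. (fst (snd p) k, fst p)))"
      by (rule continuous_map_compose[OF continuous_map_pairedI[OF a continuous_map_fst] continuous_eval_joint])
    then show "continuous_map (prod_topology I01 (MG G X act n)) X (\<lambda>x. ?h x k)"
      using k by (simp add: o_def)
  qed (simp add: image_subset_iff)
  show ?thesis
    unfolding homotopic_with[where P="\<lambda>_. True", simplified]
  proof (intro exI conjI ballI)
    show "continuous_map (prod_topology I01 (MG G X act n)) (powX X n) ?h" using c .
  next
    fix x assume x: "x \<in> topspace (MG G X act n)"
    obtain \<alpha> gs where xe: "x = (\<alpha>, gs)" by fastforce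
    have x': "(\<alpha>, gs) \<in> topspace (MG G X act n)" using x xe by simp
    have "?h (0, x) = (\<lambda>i\<in>{..<n}. \<alpha> i 0)" by (simp add: xe)
    also have "\<dots> = (\<lambda>i\<in>{..<n}. act (\<alpha> 0 0) (gprod G gs i))"
      by (rule restrict_ext) (rule MG_start[OF ra x'], simp)
    also have "\<dots> = (sat_diag G act n \<circ> (\<lambda>x. (fst x 0 0, snd x))) x"
      by (simp add: xe sat_diag_def)
    finally show "?h (0, x) = (sat_diag G act n \<circ> (\<lambda>x. (fst x 0 0, snd x))) x" .
  next
    fix x assume x: "x \<in> topspace (MG G X act n)"
    show "?h (1, x) = eval_map n x" by (simp add: eval_map_eq)
  qed
qed

theorem mainTheorem1:
  fixes G :: "('g, 'b) monoid_scheme" and X :: "'a topology"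
    and act :: "'a \<Rightarrow> 'g \<Rightarrow> 'a" and n :: nat
  assumes "Hausdorff_space X" and "path_connected_space X"
    and "locally_path_connected_space X"
    and "right_action G X act" and "finite (carrier G)"
    and "n \<ge> 2"
  shows "fibration_wrt TYPE('z) (MG G X act n) (powX X n) (eval_map n)
         \<and> secat (MG G X act n) (powX X n) (eval_map n)
           = secat (XG G X n) (powX X n) (sat_diag G act n)"
proof
  show "fibration_wrt TYPE('z) (MG G X act n) (powX X n) (eval_map n)"
    unfolding fibration_wrt_def by (intro conjI allI cont_eval_map hlp_eval)
  have n0: "0 < n" using assms(6) by simp
  show "secat (MG G X act n) (powX X n) (eval_map n) = secat (XG G X n) (powX X n) (sat_diag G act n)"
  proof (rule secat_eq_transfer[OF phi_cont[OF n0] hom_MG[OF assms(4)] psi_cont[OF assms(4)]])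
    show "homotopic_with (\<lambda>_. True) (XG G X n) (powX X n)
      (eval_map n \<circ> (\<lambda>x. ((\<lambda>i\<in>{..<n}. \<lambda>s. if s \<in> {0..1} then act (fst x) (gprod G (snd x) i) else undefined), snd x)))
      (sat_diag G act n)"
    proof (rule homotopic_with_equal)
      show "continuous_map (XG G X n) (powX X n)
       (eval_map n \<circ> (\<lambda>x. ((\<lambda>i\<in>{..<n}. \<lambda>s. if s \<in> {0..1} then act (fst x) (gprod G (snd x) i) else undefined), snd x)))"
        by (rule continuous_map_compose[OF psi_cont[OF assms(4)] cont_eval_map])
    next
      fix x
      show "(eval_map n \<circ> (\<lambda>x. ((\<lambda>i\<in>{..<n}. \<lambda>s::real. if s \<in> {0..1} then act (fst x) (gprod G (snd x) i) else undefined), snd x))) x = sat_diag G act n x"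
        using eval_psi[where x=x and n=n and act=act and G=G] by simp
    qed simp_all
  qed
qed

end
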